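(* Let $\Gamma$ be a simple graph on a finite set $X$ with $|X|\ge3$. If for some point $x\in X$ the graph $\Gamma^x$ is extensible, then for every $y\in X$ the graph $\Gamma^y$ is extensible, and the parameters of $\Gamma^x$ and $\Gamma^y$ are equal.
   Context: A finite simple graph $(\Lambda,Y)$ is extensible with parameters $(t,s,\bar s)$ (nonnegative integers) if: (1) $\Lambda$ has diameter $2$; (2) for every $y\in Y$, with $\Lambda(y,d)$ the set of vertices at distance $d$ from $y$: (a) $|\Lambda(y,1)|=2s$; (b) $|\Lambda(y,2)|=2\bar s$; (c) every $z\in\Lambda(y,1)$ is adjacent to exactly $\bar s$ points of $\Lambda(y,2)$ and exactly $t=2s-\bar s-1$ points of $\Lambda(y,1)$; (d) every $z\in\Lambda(y,2)$ is adjacent to exactly $s$ points of $\Lambda(y,2)$ and exactly $s$ points of $\Lambda(y,1)$; (3) every edge lies in exactly $t$ triangles; (4) $|Y|=1+2s+2\bar s$. The matrix of a graph on $X$ has entry $-1$ at $(i,j)$ if $i\ne j$ are adjacent and $1$ otherwise; two graphs with matrices $\mathcal{E},\mathcal{E}'$ are associated if $\varepsilon'_{i,j}=\nu_i\nu_j\varepsilon_{i,j}$ for some $\nu_i\in\{\pm1\}$. ${}^x\Gamma$ is the unique graph associated to $\Gamma$ in which $x$ is isolated, and $\Gamma^x$ is the graph induced by ${}^x\Gamma$ on $X\setminus\{x\}$. *)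

theory Defs
  imports Main
begin

definition graph_on :: "'a set \<Rightarrow> ('a \<Rightarrow> 'a \<Rightarrow> bool) \<Rightarrow> bool" where
  "graph_on X E \<longleftrightarrow> (\<forall>u v. E u v \<longrightarrow> u \<in> X \<and> v \<in> X \<and> u \<noteq> v) \<and> (\<forall>u v. E u v \<longrightarrow> E v u)"

definition gmat :: "('a \<Rightarrow> 'a \<Rightarrow> bool) \<Rightarrow> 'a \<Rightarrow> 'a \<Rightarrow> int" where
  "gmat E i j = (if i \<noteq> j \<and> E i j then -1 else 1)"

definition associated :: "'a set \<Rightarrow> ('a \<Rightarrow> 'a \<Rightarrow> bool) \<Rightarrow> ('a \<Rightarrow> 'a \<Rightarrow> bool) \<Rightarrow> bool" where
  "associated X E E' \<longleftrightarrow> (\<exists>\<nu> :: 'a \<Rightarrow> int. (\<forall>i\<in>X. \<nu> i = 1 \<or> \<nu> i = -1) \<and>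
      (\<forall>i\<in>X. \<forall>j\<in>X. gmat E' i j = \<nu> i * \<nu> j * gmat E i j))"

text \<open>${}^x\Gamma$: the unique graph on X associated to E in which x is isolated.\<close>
definition iso_switch :: "'a set \<Rightarrow> ('a \<Rightarrow> 'a \<Rightarrow> bool) \<Rightarrow> 'a \<Rightarrow> ('a \<Rightarrow> 'a \<Rightarrow> bool)" where
  "iso_switch X E x = (THE E'. graph_on X E' \<and> associated X E E' \<and> (\<forall>v. \<not> E' x v))"

definition derived :: "'a set \<Rightarrow> ('a \<Rightarrow> 'a \<Rightarrow> bool) \<Rightarrow> 'a \<Rightarrow> ('a \<Rightarrow> 'a \<Rightarrow> bool)" where
  "derived X E x = (\<lambda>u v. u \<in> X - {x} \<and> v \<in> X - {x} \<and> iso_switch X E x u v)"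

definition dist1 :: "'a set \<Rightarrow> ('a \<Rightarrow> 'a \<Rightarrow> bool) \<Rightarrow> 'a \<Rightarrow> 'a set" where
  "dist1 Y L y = {z \<in> Y. z \<noteq> y \<and> L y z}"

definition dist2 :: "'a set \<Rightarrow> ('a \<Rightarrow> 'a \<Rightarrow> bool) \<Rightarrow> 'a \<Rightarrow> 'a set" where
  "dist2 Y L y = {z \<in> Y. z \<noteq> y \<and> \<not> L y z \<and> (\<exists>w\<in>Y. L y w \<and> L w z)}"

definition diameter2 :: "'a set \<Rightarrow> ('a \<Rightarrow> 'a \<Rightarrow> bool) \<Rightarrow> bool" where
  "diameter2 Y L \<longleftrightarrow> (\<forall>y\<in>Y. \<forall>z\<in>Y. y = z \<or> z \<in> dist1 Y L y \<or> z \<in> dist2 Y L y)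
                     \<and> (\<exists>y\<in>Y. \<exists>z\<in>Y. z \<in> dist2 Y L y)"

definition extensible :: "'a set \<Rightarrow> ('a \<Rightarrow> 'a \<Rightarrow> bool) \<Rightarrow> nat \<Rightarrow> nat \<Rightarrow> nat \<Rightarrow> bool" where
  "extensible Y L t s sb \<longleftrightarrow>
     finite Y \<and> graph_on Y L \<and>
     int t = 2 * int s - int sb - 1 \<and>
     diameter2 Y L \<and>
     (\<forall>y\<in>Y.
        card (dist1 Y L y) = 2 * s \<and>
        card (dist2 Y L y) = 2 * sb \<and>
        (\<forall>z\<in>dist1 Y L y. card {w \<in> dist2 Y L y. L z w} = sb \<and>
                          card {w \<in> dist1 Y L y. L z w} = t) \<and>
        (\<forall>z\<in>dist2 Y L y. card {w \<in> dist2 Y L y. L z w} = s \<and>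
                          card {w \<in> dist1 Y L y. L z w} = s)) \<and>
     (\<forall>u\<in>Y. \<forall>v\<in>Y. L u v \<longrightarrow> card {w \<in> Y. L u w \<and> L v w} = t) \<and>
     card Y = 1 + 2 * s + 2 * sb"

end

theory Submission imports Defs begin

definition tw :: "('a \<Rightarrow> 'a \<Rightarrow> bool) \<Rightarrow> 'a \<Rightarrow> 'a \<Rightarrow> 'a \<Rightarrow> bool" where
  "tw E a b c = ((E a b \<noteq> E b c) \<noteq> E a c)"

lemma iso_switch_char:
  assumes g: "graph_on X E" and y: "y \<in> X"
  shows "iso_switch X E y = (\<lambda>u v. u \<in> X \<and> v \<in> X \<and> u \<noteq> v \<and> u \<noteq> y \<and> v \<noteq> y \<and> tw E y u v)"
    (is "_ = ?F")
  unfolding iso_switch_def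
proof (rule the_equality)
  have sym: "\<And>u v. E u v = E v u" using g unfolding graph_on_def by blast
  have irr: "\<And>u. \<not> E u u" using g unfolding graph_on_def by blast
  show "graph_on X ?F \<and> associated X E ?F \<and> (\<forall>v. \<not> ?F y v)"
  proof (intro conjI)
    show "graph_on X ?F" unfolding graph_on_def tw_def using sym by auto
    show "\<forall>v. \<not> ?F y v" by auto
    show "associated X E ?F" unfolding associated_def
    proof (intro exI[of _ "\<lambda>i. gmat E y i"] conjI ballI)
      fix i assume "i \<in> X" show "gmat E y i = 1 \<or> gmat E y i = -1" by (simp add: gmat_def)
    next
      fix i j assume "i \<in> X" "j \<in> X"
      then show "gmat ?F i j = gmat E y i * gmat E y j * gmat E i j"
        using sym[of y i] sym[of y j] irr[of y] irr[of i] 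
        by (auto simp: gmat_def tw_def)
    qed
  qed
next
  fix G assume G: "graph_on X G \<and> associated X E G \<and> (\<forall>v. \<not> G y v)"
  have symG: "\<And>u v. G u v = G v u" using G unfolding graph_on_def by blast
  have sym: "\<And>u v. E u v = E v u" using g unfolding graph_on_def by blast
  obtain \<nu> where nu: "\<forall>i\<in>X. \<nu> i = 1 \<or> \<nu> i = -1"
     and m: "\<forall>i\<in>X. \<forall>j\<in>X. gmat G i j = \<nu> i * \<nu> j * gmat E i j"
    using G unfolding associated_def by blast
  show "G = ?F"
  proof (intro ext)
    fix u v
    show "G u v = ?F u v"
    proof (cases "u \<in> X \<and> v \<in> X \<and> u \<noteq> v \<and> u \<noteq> y \<and> v \<noteq> y")
      case False
      then show ?thesis using G symG[of u y] unfolding graph_on_def by auto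
    next
      case True
      then have u: "u \<in> X" and v: "v \<in> X" and uv: "u \<noteq> v" and uy: "u \<noteq> y" and vy: "v \<noteq> y" by auto
      have h1: "gmat G y u = \<nu> y * \<nu> u * gmat E y u" using m y u by blast
      have h2: "gmat G y v = \<nu> y * \<nu> v * gmat E y v" using m y v by blast
      have h3: "gmat G u v = \<nu> u * \<nu> v * gmat E u v" using m u v by blast
      have g1: "gmat G y u = 1" "gmat G y v = 1" using G by (auto simp: gmat_def)
      have n: "\<nu> y = 1 \<or> \<nu> y = -1" "\<nu> u = 1 \<or> \<nu> u = -1" "\<nu> v = 1 \<or> \<nu> v = -1"
        using nu y u v by auto
      have sq: "\<And>a::int. a = 1 \<or> a = -1 \<Longrightarrow> a * a = 1" by auto
      have gy: "\<And>w. gmat E y w = 1 \<or> gmat E y w = -1" by (simp add: gmat_def)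
      have nu_u: "\<nu> u = \<nu> y * gmat E y u"
      proof -
        have "\<nu> y * gmat E y u * (\<nu> y * \<nu> u * gmat E y u) = \<nu> y * gmat E y u"
          using h1 g1 by simp
        also have "\<nu> y * gmat E y u * (\<nu> y * \<nu> u * gmat E y u) = (\<nu> y * \<nu> y) * (gmat E y u * gmat E y u) * \<nu> u"
          by (simp add: algebra_simps)
        finally show ?thesis using sq[OF n(1)] sq[OF gy[of u]] by simp
      qed
      have nu_v: "\<nu> v = \<nu> y * gmat E y v"
      proof -
        have "\<nu> y * gmat E y v * (\<nu> y * \<nu> v * gmat E y v) = \<nu> y * gmat E y v"
          using h2 g1 by simp
        also have "\<nu> y * gmat E y v * (\<nu> y * \<nu> v * gmat E y v) = (\<nu> y * \<nu> y) * (gmat E y v * gmat E y v) * \<nu> v"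
          by (simp add: algebra_simps)
        finally show ?thesis using sq[OF n(1)] sq[OF gy[of v]] by simp
      qed
      have "gmat G u v = (\<nu> y * \<nu> y) * gmat E y u * gmat E y v * gmat E u v"
        using h3 nu_u nu_v by (simp add: algebra_simps)
      then have "gmat G u v = gmat E y u * gmat E y v * gmat E u v" using sq[OF n(1)] by simp
      then show ?thesis using uv uy vy u v
        by (cases "E y u"; cases "E y v"; cases "E u v"; cases "G u v"; simp add: gmat_def tw_def)
    qed
  qed
qed


definition cnt :: "'a set \<Rightarrow> ('a \<Rightarrow> 'a \<Rightarrow> bool) \<Rightarrow> 'a \<Rightarrow> 'a \<Rightarrow> nat" where
  "cnt W A a b = card {c \<in> W - {a,b}. tw A a b c}"

lemma card_sum: "finite S \<Longrightarrow> int (card {c\<in>S. Q c}) = (\<Sum>c\<in>S. if Q c then 1 else 0)"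
  by (simp add: sum.If_cases Int_def conj_commute)

lemma cnt_pair:
  assumes fin: "finite V" and g: "graph_on V A" and y: "y \<notin> V"
    and u: "u \<in> V" and w: "w \<in> V" and uw: "u \<noteq> w"
  shows "int (cnt (insert y V) A u w) =
     (if A u w then int (card V) + 1 + 2 * int (card {c\<in>V. A u c \<and> A w c})
         - int (card {c\<in>V. A u c}) - int (card {c\<in>V. A w c})
      else int (card {c\<in>V. A u c}) + int (card {c\<in>V. A w c}) - 2 * int (card {c\<in>V. A u c \<and> A w c}))"
proof -
  have sym: "\<And>a b. A a b = A b a" using g unfolding graph_on_def by blast
  have irr: "\<And>a. \<not> A a a" using g unfolding graph_on_def by blast
  have ny: "\<And>a. \<not> A a y" "\<And>a. \<not> A y a" using g y unfolding graph_on_def by blast+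
  define P where "P = V - {u,w}"
  have finP: "finite P" using fin P_def by simp
  have "insert y V - {u,w} = insert y P" using y u w P_def by auto
  moreover have "y \<notin> P" using y P_def by auto
  moreover have Qy: "tw A u w y = A u w" using ny by (simp add: tw_def)
  ultimately have c1: "int (cnt (insert y V) A u w) = (if A u w then 1 else 0) + int (card {c\<in>P. tw A u w c})"
  proof -
    assume a: "insert y V - {u,w} = insert y P" "y \<notin> P"
    have "{c \<in> insert y V - {u,w}. tw A u w c} = (if A u w then insert y {c\<in>P. tw A u w c} else {c\<in>P. tw A u w c})"
      using a Qy by auto
    then show ?thesis unfolding cnt_def using finP a(2) by simp
  qed
  let ?ia = "\<lambda>c. if A u c then 1 else (0::int)"
  let ?ib = "\<lambda>c. if A w c then 1 else (0::int)"
  let ?iab = "\<lambda>c. if A u c \<and> A w c then 1 else (0::int)"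
  have sa: "(\<Sum>c\<in>P. ?ia c) = int (card {c\<in>V. A u c}) - (if A u w then 1 else 0)"
  proof -
    have eqa: "{c\<in>P. A u c} = {c\<in>V. A u c} - {w}" using P_def irr by auto
    then have "int (card {c\<in>P. A u c}) = int (card {c\<in>V. A u c}) - (if A u w then 1 else 0)"
    proof (cases "A u w")
      case True
      then have m: "w \<in> {c\<in>V. A u c}" using w by simp
      have f: "finite {c\<in>V. A u c}" using fin by simp
      have "card {c\<in>V. A u c} > 0" using f m card_gt_0_iff by (metis empty_iff)
      then show ?thesis using True card_Diff_singleton[OF m] eqa by (simp add: of_nat_diff)
    qed (simp add: eqa)
    then show ?thesis using card_sum[OF finP, of "A u"] by simp
  qed
  have sb: "(\<Sum>c\<in>P. ?ib c) = int (card {c\<in>V. A w c}) - (if A u w then 1 else 0)"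
  proof -
    have eqa: "{c\<in>P. A w c} = {c\<in>V. A w c} - {u}" using P_def irr by auto
    then have "int (card {c\<in>P. A w c}) = int (card {c\<in>V. A w c}) - (if A w u then 1 else 0)"
    proof (cases "A w u")
      case True
      then have m: "u \<in> {c\<in>V. A w c}" using u by simp
      have f: "finite {c\<in>V. A w c}" using fin by simp
      have "card {c\<in>V. A w c} > 0" using f m card_gt_0_iff by (metis empty_iff)
      then show ?thesis using True card_Diff_singleton[OF m] eqa by (simp add: of_nat_diff)
    qed (simp add: eqa)
    then show ?thesis using card_sum[OF finP, of "A w"] sym[of u w] by simp
  qed
  have sab: "(\<Sum>c\<in>P. ?iab c) = int (card {c\<in>V. A u c \<and> A w c})"
  proof -
    have "{c\<in>P. A u c \<and> A w c} = {c\<in>V. A u c \<and> A w c}" using P_def irr by auto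
    then show ?thesis using card_sum[OF finP, of "\<lambda>c. A u c \<and> A w c"] by simp
  qed
  have c2: "card {u,w} \<le> card V" using fin u w by (intro card_mono) auto
  have cardP: "int (card P) = int (card V) - 2" using P_def fin u w uw c2
    by (simp add: card_Diff_subset of_nat_diff)
  have t: "int (card {c\<in>P. tw A u w c}) = (\<Sum>c\<in>P. if A u w then 1 - ?ia c - ?ib c + 2 * ?iab c else ?ia c + ?ib c - 2 * ?iab c)"
    unfolding card_sum[OF finP]
    by (rule sum.cong) (auto simp: tw_def)
  show ?thesis
  proof (cases "A u w")
    case True
    have "int (card {c\<in>P. tw A u w c}) = (\<Sum>c\<in>P. 1 - ?ia c - ?ib c + 2 * ?iab c)" using t True by simp
    also have "\<dots> = int (card P) - (\<Sum>c\<in>P. ?ia c) - (\<Sum>c\<in>P. ?ib c) + 2 * (\<Sum>c\<in>P. ?iab c)"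
      by (simp add: sum.distrib sum_subtractf sum_distrib_left)
    finally show ?thesis using c1 True sa sb sab cardP by simp
  next
    case False
    have "int (card {c\<in>P. tw A u w c}) = (\<Sum>c\<in>P. ?ia c + ?ib c - 2 * ?iab c)" using t False by simp
    also have "\<dots> = (\<Sum>c\<in>P. ?ia c) + (\<Sum>c\<in>P. ?ib c) - 2 * (\<Sum>c\<in>P. ?iab c)"
      by (simp add: sum.distrib sum_subtractf sum_distrib_left)
    finally show ?thesis using c1 False sa sb sab by simp
  qed
qed

lemma cnt_y:
  assumes fin: "finite V" and g: "graph_on V A" and y: "y \<notin> V" and u: "u \<in> V"
  shows "cnt (insert y V) A y u = card {c\<in>V. A u c}" "cnt (insert y V) A u y = card {c\<in>V. A u c}"
proof -
  have sym: "\<And>a b. A a b = A b a" using g unfolding graph_on_def by blast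
  have irr: "\<And>a. \<not> A a a" using g unfolding graph_on_def by blast
  have ny: "\<And>a. \<not> A a y" "\<And>a. \<not> A y a" using g y unfolding graph_on_def by blast+
  have "{c \<in> insert y V - {y,u}. tw A y u c} = {c\<in>V. A u c}" using ny irr y by (auto simp: tw_def)
  then show "cnt (insert y V) A y u = card {c\<in>V. A u c}" unfolding cnt_def by simp
  have "{c \<in> insert y V - {u,y}. tw A u y c} = {c\<in>V. A u c}" using ny irr y sym by (auto simp: tw_def)
  then show "cnt (insert y V) A u y = card {c\<in>V. A u c}" unfolding cnt_def by simp
qed


definition srg :: "'a set \<Rightarrow> ('a \<Rightarrow> 'a \<Rightarrow> bool) \<Rightarrow> nat \<Rightarrow> nat \<Rightarrow> nat \<Rightarrow> bool" where
  "srg V A t s sb \<longleftrightarrow> finite V \<and> graph_on V A \<and> int t = 2 * int s - int sb - 1 \<and>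
     card V = 1 + 2 * s + 2 * sb \<and> 1 \<le> s \<and> 1 \<le> sb \<and>
     (\<forall>u\<in>V. card {c\<in>V. A u c} = 2 * s) \<and>
     (\<forall>u\<in>V. \<forall>w\<in>V. u \<noteq> w \<longrightarrow> card {c\<in>V. A u c \<and> A w c} = (if A u w then t else s))"

lemma ext_srg:
  assumes e: "extensible V A t s sb" shows "srg V A t s sb"
proof -
  have fin: "finite V" and g: "graph_on V A" and te: "int t = 2 * int s - int sb - 1"
    and d2: "diameter2 V A" and cV: "card V = 1 + 2 * s + 2 * sb"
    and loc: "\<forall>y\<in>V.
        card (dist1 V A y) = 2 * s \<and>
        card (dist2 V A y) = 2 * sb \<and>
        (\<forall>z\<in>dist1 V A y. card {w \<in> dist2 V A y. A z w} = sb \<and>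
                          card {w \<in> dist1 V A y. A z w} = t) \<and>
        (\<forall>z\<in>dist2 V A y. card {w \<in> dist2 V A y. A z w} = s \<and>
                          card {w \<in> dist1 V A y. A z w} = s)"
    and tri: "\<forall>u\<in>V. \<forall>v\<in>V. A u v \<longrightarrow> card {w \<in> V. A u w \<and> A v w} = t"
    using e unfolding extensible_def by auto
  have sym: "\<And>a b. A a b = A b a" using g unfolding graph_on_def by blast
  have irr: "\<And>a. \<not> A a a" using g unfolding graph_on_def by blast
  have inV: "\<And>a b. A a b \<Longrightarrow> a \<in> V \<and> b \<in> V" using g unfolding graph_on_def by blast
  have d1: "\<And>y. dist1 V A y = {c\<in>V. A y c}" unfolding dist1_def using irr by auto
  obtain y0 z0 where y0: "y0 \<in> V" "z0 \<in> V" "z0 \<in> dist2 V A y0" using d2 unfolding diameter2_def by blast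
  then obtain w0 where w0: "w0 \<in> V" "A y0 w0" unfolding dist2_def by blast
  have "w0 \<in> dist1 V A y0" using w0 d1 by simp
  then have "card (dist1 V A y0) \<noteq> 0" using fin unfolding dist1_def by auto
  then have s1: "1 \<le> s" using loc y0 by auto
  have "card (dist2 V A y0) \<noteq> 0" using fin y0 unfolding dist2_def by auto
  then have sb1: "1 \<le> sb" using loc y0 by auto
  have deg: "\<forall>u\<in>V. card {c\<in>V. A u c} = 2 * s" using loc d1 by auto
  have cn: "\<forall>u\<in>V. \<forall>w\<in>V. u \<noteq> w \<longrightarrow> card {c\<in>V. A u c \<and> A w c} = (if A u w then t else s)"
  proof (intro ballI impI)
    fix u w assume u: "u \<in> V" and w: "w \<in> V" and uw: "u \<noteq> w"
    show "card {c\<in>V. A u c \<and> A w c} = (if A u w then t else s)"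
    proof (cases "A u w")
      case True then show ?thesis using tri u w by simp
    next
      case False
      have "w \<in> dist2 V A u" using d2 u w uw False unfolding diameter2_def dist1_def by blast
      then have "card {c \<in> dist1 V A u. A w c} = s" using loc u by blast
      moreover have "{c \<in> dist1 V A u. A w c} = {c\<in>V. A u c \<and> A w c}" using d1 by auto
      ultimately show ?thesis using False by simp
    qed
  qed
  show ?thesis unfolding srg_def using fin g te cV s1 sb1 deg cn by blast
qed

lemma srg_ext:
  assumes r: "srg V A t s sb" shows "extensible V A t s sb"
proof -
  have fin: "finite V" and g: "graph_on V A" and te: "int t = 2 * int s - int sb - 1"
    and cV: "card V = 1 + 2 * s + 2 * sb" and s1: "1 \<le> s" and sb1: "1 \<le> sb"
    and deg: "\<forall>u\<in>V. card {c\<in>V. A u c} = 2 * s"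
    and cn: "\<forall>u\<in>V. \<forall>w\<in>V. u \<noteq> w \<longrightarrow> card {c\<in>V. A u c \<and> A w c} = (if A u w then t else s)"
    using r unfolding srg_def by auto
  have sym: "\<And>a b. A a b = A b a" using g unfolding graph_on_def by blast
  have irr: "\<And>a. \<not> A a a" using g unfolding graph_on_def by blast
  have inV: "\<And>a b. A a b \<Longrightarrow> a \<in> V \<and> b \<in> V" using g unfolding graph_on_def by blast
  have d1: "\<And>y. dist1 V A y = {c\<in>V. A y c}" unfolding dist1_def using irr by auto
  have d2: "\<And>y. y \<in> V \<Longrightarrow> dist2 V A y = V - insert y {c\<in>V. A y c}"
  proof
    fix y assume y: "y \<in> V"
    show "dist2 V A y \<subseteq> V - insert y {c\<in>V. A y c}" unfolding dist2_def by auto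
    show "V - insert y {c\<in>V. A y c} \<subseteq> dist2 V A y"
    proof
      fix z assume z: "z \<in> V - insert y {c\<in>V. A y c}"
      then have "card {c\<in>V. A y c \<and> A z c} = s" using cn y by auto
      then have "{c\<in>V. A y c \<and> A z c} \<noteq> {}" using s1 by (metis card.empty not_one_le_zero)
      then obtain w where "w \<in> V" "A y w" "A w z" using sym by auto
      then show "z \<in> dist2 V A y" using z unfolding dist2_def by auto
    qed
  qed
  have t_eq: "t + 1 + sb = 2 * s" using te by linarith
  have loc: "\<forall>y\<in>V.
        card (dist1 V A y) = 2 * s \<and>
        card (dist2 V A y) = 2 * sb \<and>
        (\<forall>z\<in>dist1 V A y. card {w \<in> dist2 V A y. A z w} = sb \<and>
                          card {w \<in> dist1 V A y. A z w} = t) \<and>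
        (\<forall>z\<in>dist2 V A y. card {w \<in> dist2 V A y. A z w} = s \<and>
                          card {w \<in> dist1 V A y. A z w} = s)"
  proof (intro ballI)
    fix y assume y: "y \<in> V"
    let ?N = "{c\<in>V. A y c}"
    have ha: "card (dist1 V A y) = 2 * s" using d1 deg y by simp
    have sub: "insert y ?N \<subseteq> V" using y by auto
    have "card (insert y ?N) = 1 + 2 * s" using deg y irr fin by simp
    then have hb: "card (dist2 V A y) = 2 * sb" using d2[OF y] card_Diff_subset[OF finite_subset[OF sub fin] sub] cV
      by simp
    have hc: "\<forall>z\<in>dist1 V A y. card {w \<in> dist2 V A y. A z w} = sb \<and> card {w \<in> dist1 V A y. A z w} = t"
    proof (intro ballI)
      fix z assume "z \<in> dist1 V A y"
      then have z: "z \<in> V" "A y z" "z \<noteq> y" using d1 irr by auto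
      have c: "card {c\<in>V. A y c \<and> A z c} = t" using cn y z by simp
      have e1: "{w \<in> dist1 V A y. A z w} = {c\<in>V. A y c \<and> A z c}" using d1 by auto
      then have h1: "card {w \<in> dist1 V A y. A z w} = t" using c by simp
      have e2: "{w \<in> dist2 V A y. A z w} = {c\<in>V. A z c} - insert y {c\<in>V. A y c \<and> A z c}"
        using d2[OF y] z sym by auto
      have sub2: "insert y {c\<in>V. A y c \<and> A z c} \<subseteq> {c\<in>V. A z c}" using z y sym by auto
      have "card (insert y {c\<in>V. A y c \<and> A z c}) = t + 1" using c irr fin by simp
      then have "card {w \<in> dist2 V A y. A z w} = sb"
        using e2 card_Diff_subset[OF finite_subset[OF sub2] sub2] deg z t_eq fin by simp
      then show "card {w \<in> dist2 V A y. A z w} = sb \<and> card {w \<in> dist1 V A y. A z w} = t" using h1 by simp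
    qed
    have hd: "\<forall>z\<in>dist2 V A y. card {w \<in> dist2 V A y. A z w} = s \<and> card {w \<in> dist1 V A y. A z w} = s"
    proof (intro ballI)
      fix z assume "z \<in> dist2 V A y"
      then have z: "z \<in> V" "\<not> A y z" "z \<noteq> y" using d2[OF y] by auto
      have c: "card {c\<in>V. A y c \<and> A z c} = s" using cn y z by simp
      have e1: "{w \<in> dist1 V A y. A z w} = {c\<in>V. A y c \<and> A z c}" using d1 by auto
      then have h1: "card {w \<in> dist1 V A y. A z w} = s" using c by simp
      have e2: "{w \<in> dist2 V A y. A z w} = {c\<in>V. A z c} - {c\<in>V. A y c \<and> A z c}"
        using d2[OF y] z sym by auto
      have sub2: "{c\<in>V. A y c \<and> A z c} \<subseteq> {c\<in>V. A z c}" by auto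
      have "card {w \<in> dist2 V A y. A z w} = s"
        using e2 card_Diff_subset[OF finite_subset[OF sub2] sub2] deg z c fin by simp
      then show "card {w \<in> dist2 V A y. A z w} = s \<and> card {w \<in> dist1 V A y. A z w} = s" using h1 by simp
    qed
    show "card (dist1 V A y) = 2 * s \<and>
        card (dist2 V A y) = 2 * sb \<and>
        (\<forall>z\<in>dist1 V A y. card {w \<in> dist2 V A y. A z w} = sb \<and>
                          card {w \<in> dist1 V A y. A z w} = t) \<and>
        (\<forall>z\<in>dist2 V A y. card {w \<in> dist2 V A y. A z w} = s \<and>
                          card {w \<in> dist1 V A y. A z w} = s)" using ha hb hc hd by blast
  qed
  have tri: "\<forall>u\<in>V. \<forall>v\<in>V. A u v \<longrightarrow> card {w \<in> V. A u w \<and> A v w} = t"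
    using cn irr by fastforce
  have dm: "diameter2 V A"
    unfolding diameter2_def
  proof
    show "\<forall>y\<in>V. \<forall>z\<in>V. y = z \<or> z \<in> dist1 V A y \<or> z \<in> dist2 V A y"
      using d1 d2 by auto
    have "V \<noteq> {}" using cV by auto
    then obtain y where y: "y \<in> V" by blast
    then have "card (dist2 V A y) \<noteq> 0" using loc sb1 by auto
    then obtain z where "z \<in> dist2 V A y" by fastforce
    then show "\<exists>y\<in>V. \<exists>z\<in>V. z \<in> dist2 V A y" using y unfolding dist2_def by blast
  qed
  show ?thesis unfolding extensible_def using fin g te dm loc tri cV by blast
qed


lemma L1:
  assumes r: "srg V A t s sb" and y: "y \<notin> V" and a: "a \<in> insert y V" and b: "b \<in> insert y V"
    and ab: "a \<noteq> b"
  shows "cnt (insert y V) A a b = 2 * s"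
proof -
  have fin: "finite V" and g: "graph_on V A" and te: "int t = 2 * int s - int sb - 1"
    and cV: "card V = 1 + 2 * s + 2 * sb"
    and deg: "\<forall>u\<in>V. card {c\<in>V. A u c} = 2 * s"
    and cn: "\<forall>u\<in>V. \<forall>w\<in>V. u \<noteq> w \<longrightarrow> card {c\<in>V. A u c \<and> A w c} = (if A u w then t else s)"
    using r unfolding srg_def by auto
  show ?thesis
  proof (cases "a = y")
    case True
    then have "b \<in> V" using b ab by auto
    then show ?thesis using cnt_y(1)[OF fin g y] deg True by simp
  next
    case False
    note aV = False
    show ?thesis
    proof (cases "b = y")
      case True
      have "a \<in> V" using a aV by auto
      then show ?thesis using cnt_y(2)[OF fin g y] deg True by simp
    next
      case False
      have a': "a \<in> V" and b': "b \<in> V" using a b aV False by auto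
      have da: "card {c\<in>V. A a c} = 2 * s" and db: "card {c\<in>V. A b c} = 2 * s" using deg a' b' by auto
      have c: "card {c\<in>V. A a c \<and> A b c} = (if A a b then t else s)" using cn a' b' ab by auto
      have "int (cnt (insert y V) A a b) = int (2 * s)"
        using cnt_pair[OF fin g y a' b' ab] da db c cV te by (cases "A a b") auto
      then show ?thesis by simp
    qed
  qed
qed

lemma L2:
  assumes fin: "finite V" and g: "graph_on V A" and y: "y \<notin> V"
    and te: "int t = 2 * int s - int sb - 1"
    and cV: "card V = 1 + 2 * s + 2 * sb" and s1: "1 \<le> s" and sb1: "1 \<le> sb"
    and H: "\<forall>a\<in>insert y V. \<forall>b\<in>insert y V. a \<noteq> b \<longrightarrow> cnt (insert y V) A a b = 2 * s"
  shows "srg V A t s sb"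
proof -
  have deg: "\<forall>u\<in>V. card {c\<in>V. A u c} = 2 * s"
  proof
    fix u assume u: "u \<in> V"
    then have "u \<noteq> y" using y by auto
    then show "card {c\<in>V. A u c} = 2 * s" using H u cnt_y(1)[OF fin g y u] by auto
  qed
  have cn: "\<forall>u\<in>V. \<forall>w\<in>V. u \<noteq> w \<longrightarrow> card {c\<in>V. A u c \<and> A w c} = (if A u w then t else s)"
  proof (intro ballI impI)
    fix u w assume u: "u \<in> V" and w: "w \<in> V" and uw: "u \<noteq> w"
    have h: "cnt (insert y V) A u w = 2 * s" using H u w uw by auto
    have "int (card {c\<in>V. A u c \<and> A w c}) = int (if A u w then t else s)"
      using cnt_pair[OF fin g y u w uw] h deg u w cV te by (cases "A u w") auto
    then show "card {c\<in>V. A u c \<and> A w c} = (if A u w then t else s)" by linarith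
  qed
  show ?thesis unfolding srg_def using fin g te cV s1 sb1 deg cn by blast
qed

lemma derived_char:
  assumes g: "graph_on X E" and y: "y \<in> X"
  shows "derived X E y = (\<lambda>u v. u \<in> X - {y} \<and> v \<in> X - {y} \<and> u \<noteq> v \<and> tw E y u v)"
  unfolding derived_def iso_switch_char[OF g y] by auto

lemma derived_graph:
  assumes g: "graph_on X E" and y: "y \<in> X"
  shows "graph_on (X - {y}) (derived X E y)"
proof -
  have sym: "\<And>a b. E a b = E b a" using g unfolding graph_on_def by blast
  show ?thesis unfolding derived_char[OF g y] graph_on_def tw_def using sym by auto
qed

lemma derived_cnt:
  assumes g: "graph_on X E" and y: "y \<in> X" and a: "a \<in> X" and b: "b \<in> X" and ab: "a \<noteq> b"
  shows "cnt X (derived X E y) a b = cnt X E a b"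
proof -
  have sym: "\<And>a b. E a b = E b a" using g unfolding graph_on_def by blast
  have "\<And>c. c \<in> X - {a,b} \<Longrightarrow> tw (derived X E y) a b c = tw E a b c"
  proof -
    fix c assume c: "c \<in> X - {a,b}"
    have ca: "c \<noteq> a" "a \<noteq> c" "c \<noteq> b" "b \<noteq> c" using c by auto
    have irr: "\<And>u. \<not> E u u" using g unfolding graph_on_def by blast
    show "tw (derived X E y) a b c = tw E a b c"
      unfolding derived_char[OF g y] tw_def
      using a b c ab ca irr[of y] sym[of y a] sym[of y b] sym[of y c] sym[of a b] sym[of b c] sym[of a c]
      by (cases "a = y"; cases "b = y"; cases "c = y"; simp; blast)
  qed
  then have "{c \<in> X - {a,b}. tw (derived X E y) a b c} = {c \<in> X - {a,b}. tw E a b c}" by auto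
  then show ?thesis unfolding cnt_def by simp
qed

theorem proposition5:
  fixes X :: "'a set" and E :: "'a \<Rightarrow> 'a \<Rightarrow> bool" and x :: 'a
    and t s sb :: nat
  assumes "finite X" and "card X \<ge> 3" and "graph_on X E" and "x \<in> X"
    and "extensible (X - {x}) (derived X E x) t s sb"
  shows "\<forall>y\<in>X. extensible (X - {y}) (derived X E y) t s sb"
proof
  fix y assume y: "y \<in> X"
  have rx: "srg (X - {x}) (derived X E x) t s sb" using ext_srg assms(5) by blast
  have Xx: "insert x (X - {x}) = X" using assms(4) by auto
  have Xy: "insert y (X - {y}) = X" using y by auto
  have cE: "\<forall>a\<in>X. \<forall>b\<in>X. a \<noteq> b \<longrightarrow> cnt X E a b = 2 * s"
  proof (intro ballI impI)
    fix a b assume a: "a \<in> X" and b: "b \<in> X" and ab: "a \<noteq> b"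
    have "cnt (insert x (X - {x})) (derived X E x) a b = 2 * s"
      using L1[OF rx, of x a b] a b ab Xx by auto
    then show "cnt X E a b = 2 * s" using derived_cnt[OF assms(3) assms(4) a b ab] Xx by simp
  qed
  have H: "\<forall>a\<in>insert y (X - {y}). \<forall>b\<in>insert y (X - {y}). a \<noteq> b \<longrightarrow>
      cnt (insert y (X - {y})) (derived X E y) a b = 2 * s"
    unfolding Xy using cE derived_cnt[OF assms(3) y] by auto
  have p: "int t = 2 * int s - int sb - 1" "card (X - {x}) = 1 + 2 * s + 2 * sb" "1 \<le> s" "1 \<le> sb"
    using rx unfolding srg_def by auto
  have cy: "card (X - {y}) = 1 + 2 * s + 2 * sb"
    using p(2) assms(1) assms(4) y by simp
  have "srg (X - {y}) (derived X E y) t s sb"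
    by (rule L2[OF _ derived_graph[OF assms(3) y] _ p(1) cy p(3) p(4) H]) (use assms(1) in auto)
  then show "extensible (X - {y}) (derived X E y) t s sb" by (rule srg_ext)
qed

end
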